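(* Let $F$ be any field. Let $u\in\mathbb{N}$ and $m,n,r\in\mathbb{N}$ with $m+n\le u$, $r\le m$ and $r\le n$. Let $s=m+n-r$ and let $x\in F^{u+1}$. Then $\operatorname{rank}(H_{m,n}(x))\le r$ if and only if $\operatorname{rank}(H_{r,s}(x))\le r$.
   Context: $\mathbb{N}=\{0,1,2,\ldots\}$. For $N\in\mathbb{N}$, $x=(x_0,\ldots,x_N)\in F^{N+1}$ and integers $p,p'\ge -1$ with $p+p'\le N$, the Hankel matrix $H_{p,p'}(x)$ is the $(p+1)\times(p'+1)$ matrix $(x_{i+j})_{0\le i\le p,\,0\le j\le p'}$. *)

theory Defs
  imports "Jordan_Normal_Form.DL_Rank"
begin

text \<open>Hankel matrix H_{p,p'}(x) = (x_{i+j}), 0 \<le> i \<le> p, 0 \<le> j \<le> p',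
  a (p+1) x (p'+1) matrix; x = (x_0,...,x_N) is represented as a list of length N+1.\<close>
definition hankel :: "nat \<Rightarrow> nat \<Rightarrow> 'a list \<Rightarrow> 'a mat" where
  "hankel p p' x = mat (p + 1) (p' + 1) (\<lambda>(i, j). x ! (i + j))"

definition mrank :: "'a::field mat \<Rightarrow> nat" where
  "mrank A = vec_space.rank (dim_row A) A"

end

theory Submission
  imports Defs
begin

lemma sum_split_add:
  fixes f :: "nat \<Rightarrow> 'b::comm_monoid_add"
  shows "(\<Sum>j<t+s. f j) = (\<Sum>j<t. f j) + (\<Sum>p<s. f (t+p))"
  by (induction s) (auto simp: add.assoc)

lemma mat_mult_vec_sum:
  assumes "i < nr" "v \<in> carrier_vec nc"
  shows "(mat nr nc f *\<^sub>v v) $ i = (\<Sum>j<nc. f (i,j) * v $ j)"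
  using assms by (auto simp: scalar_prod_def atLeast0LessThan intro!: sum.cong)

context vec_space begin
lemma rank_le_span:
  assumes A: "A \<in> carrier_mat n na" and B: "B \<in> carrier_mat n nb"
    and sub: "set (cols B) \<subseteq> span (set (cols A))"
  shows "rank B \<le> rank A"
proof -
  have cA: "set (cols A) \<subseteq> carrier_vec n" using A cols_dim by blast
  have cB: "set (cols B) \<subseteq> carrier_vec n" using B cols_dim by blast
  have s1: "span (set (cols B)) \<subseteq> span (set (cols A))"
    using span_subsetI[OF cA sub] .
  have sA: "subspace class_ring (span (set (cols A))) V" using span_is_subspace[OF cA] .
  have sB: "subspace class_ring (span (set (cols B))) V" using span_is_subspace[OF cB] .
  have sub2: "subspace class_ring (span (set (cols B))) (vs (span (set (cols A))))"
    using nested_subspaces[OF sA sB s1] .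
  have fA: "vectorspace.fin_dim class_ring (vs (span (set (cols A))))" using fin_dim_span_cols[OF A] .
  have fB: "vectorspace.fin_dim class_ring (vs (span (set (cols B))))" using fin_dim_span_cols[OF B] .
  show ?thesis unfolding rank_def
    using vectorspace.subspace_dim[OF subspace_is_vs[OF sA] sub2 fA] fB by auto
qed

lemma rank_inj:
  assumes B: "B \<in> carrier_mat n k"
    and inj: "\<And>v. v \<in> carrier_vec k \<Longrightarrow> B *\<^sub>v v = 0\<^sub>v n \<Longrightarrow> v = 0\<^sub>v k"
  shows "rank B = k"
proof -
  have dist: "distinct (cols B)"
  proof (rule ccontr)
    assume "\<not> distinct (cols B)"
    then obtain a b where ab: "a < k" "b < k" "a \<noteq> b" "cols B ! a = cols B ! b"
      using B by (auto simp: distinct_conv_nth)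
    hence colab: "col B a = col B b" using B by auto
    define v where "v = vec k (\<lambda>l. (if l = a then 1 else 0) - (if l = b then (1::'a) else 0))"
    have vc: "v \<in> carrier_vec k" unfolding v_def by auto
    have "B *\<^sub>v v = 0\<^sub>v n"
    proof (rule eq_vecI)
      fix i assume "i < dim_vec (0\<^sub>v n :: 'a vec)"
      hence i: "i < n" by simp
      have "(B *\<^sub>v v) $ i = (\<Sum>l\<in>{0..<k}. B $$ (i,l) * ((if l = a then 1 else 0) - (if l = b then 1 else 0)))"
        using B i unfolding v_def by (auto simp: scalar_prod_def intro!: sum.cong)
      also have "\<dots> = (\<Sum>l\<in>{0..<k}. (if l = a then B $$ (i,l) else 0) - (if l = b then B $$ (i,l) else 0))"
        by (intro sum.cong) auto
      also have "\<dots> = B $$ (i,a) - B $$ (i,b)"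
        using ab by (simp add: sum_subtractf)
      also have "\<dots> = 0" using colab i B ab
        by (metis carrier_matD(1) carrier_matD(2) col_def index_vec right_minus_eq)
      finally show "(B *\<^sub>v v) $ i = 0\<^sub>v n $ i" using i by simp
    qed (use B in auto)
    hence "v = 0\<^sub>v k" using inj vc by auto
    moreover have "v $ a = 1" using ab unfolding v_def by auto
    ultimately show False using ab by auto
  qed
  have "lin_indpt (set (cols B))"
  proof
    assume "lin_dep (set (cols B))"
    then obtain v where "v \<in> carrier_vec k" "v \<noteq> 0\<^sub>v k" "B *\<^sub>v v = 0\<^sub>v n"
      using lin_depE[OF B _ dist] by blast
    thus False using inj by blast
  qed
  thus ?thesis using lin_indpt_full_rank[OF B dist] by blast
qed

lemma span_sum:
  fixes M :: nat
  assumes S: "S \<subseteq> carrier_vec n"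
    and f: "\<And>k. k < M \<Longrightarrow> f k \<in> span S \<and> f k \<in> carrier_vec n"
  shows "vec n (\<lambda>i. \<Sum>k<M. c k * f k $ i) \<in> span S"
  using f
proof (induction M)
  case 0
  have "vec n (\<lambda>i. \<Sum>k<0. c k * f k $ i) = 0 \<cdot>\<^sub>v 0\<^sub>v n" by (rule eq_vecI) simp_all
  moreover have "0 \<cdot>\<^sub>v 0\<^sub>v n \<in> span S" using S by (intro prod_in_span) auto
  ultimately show ?case by simp
next
  case (Suc M)
  have fM: "f M \<in> carrier_vec n" using Suc.prems[of M] by auto
  have "vec n (\<lambda>i. \<Sum>k<Suc M. c k * f k $ i) = vec n (\<lambda>i. \<Sum>k<M. c k * f k $ i) + c M \<cdot>\<^sub>v f M"
    by (rule eq_vecI) (use fM in simp_all)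
  moreover have "vec n (\<lambda>i. \<Sum>k<M. c k * f k $ i) \<in> span S" using Suc by auto
  moreover have "c M \<cdot>\<^sub>v f M \<in> span S" using Suc.prems[of M] S by (intro prod_in_span) auto
  ultimately show ?case using span_add1[OF S, of "vec n (\<lambda>i. \<Sum>k<M. c k * f k $ i)" "c M \<cdot>\<^sub>v f M"]
    by (simp add: module_vec_simps)
qed
lemma col_in_span:
  assumes "A \<in> carrier_mat n nc" "j < nc" shows "col A j \<in> span (set (cols A))"
proof -
  have "col A j \<in> set (cols A)" using assms by (metis cols_length cols_nth nth_mem carrier_matD(2))
  moreover have "set (cols A) \<subseteq> carrier_vec n" using assms cols_dim by blast
  ultimately show ?thesis by (intro span_mem) auto
qed

lemma lemB:
  fixes x :: "'a list"
  assumes nP: "n = P + 1" and rQ: "r \<le> Q" and c: "c kz \<noteq> 0" "kz \<le> r"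
    and ann: "\<And>l. l \<le> P + Q - r \<Longrightarrow> (\<Sum>k\<le>r. c k * x ! (k + l)) = 0"
  shows "rank (hankel P Q x) \<le> r"
proof -
  define H where "H = hankel P Q x"
  have Hc: "H \<in> carrier_mat n (Q+1)" unfolding H_def hankel_def nP by auto
  define d where "d = (GREATEST k. k \<le> r \<and> c k \<noteq> 0)"
  have dP: "d \<le> r \<and> c d \<noteq> 0" unfolding d_def by (rule GreatestI_nat[of _ kz r]) (use c in auto)
  have dmax: "c k = 0" if "d < k" "k \<le> r" for k
  proof (rule ccontr)
    assume "c k \<noteq> 0"
    hence "k \<le> d" unfolding d_def by (intro Greatest_le_nat[of _ k r]) (use that in auto)
    thus False using that by auto
  qed
  have rec: "x ! (d + l) = (\<Sum>k<d. (- c k / c d) * x ! (k + l))" if l: "l \<le> P + Q - r" for l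
  proof -
    have "(\<Sum>k\<le>r. c k * x ! (k + l)) = (\<Sum>k\<le>d. c k * x ! (k + l))"
      by (rule sum.mono_neutral_right) (use dP dmax in auto)
    also have "\<dots> = c d * x ! (d + l) + (\<Sum>k<d. c k * x ! (k + l))"
      by (simp add: lessThan_Suc_atMost[symmetric])
    finally have "c d * x ! (d + l) = - (\<Sum>k<d. c k * x ! (k + l))" using ann[OF l]
      by (simp add: eq_neg_iff_add_eq_0 add.commute)
    hence "x ! (d + l) = - (\<Sum>k<d. c k * x ! (k + l)) / c d" using dP
      by (simp add: field_simps)
    thus ?thesis by (simp add: sum_divide_distrib sum_negf[symmetric])
  qed
  define sg where "sg q = (if q < d then q else q + (Q - r + 1))" for q
  define U where "U = mat n r (\<lambda>(i,q). x ! (i + sg q))"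
  have Uc: "U \<in> carrier_mat n r" unfolding U_def by auto
  have cU: "set (cols U) \<subseteq> carrier_vec n" using Uc cols_dim by blast
  have colH: "col H j = vec n (\<lambda>i. x ! (i + j))" if "j \<le> Q" for j
    using that unfolding H_def hankel_def nP by auto
  have main: "j \<le> Q \<Longrightarrow> col H j \<in> span (set (cols U))" for j
  proof (induction j rule: less_induct)
    case (less j)
    consider "j < d" | "d \<le> j" "j \<le> Q - r + d" | "Q - r + d < j" by linarith
    then show ?case
    proof cases
      case 1
      have "col H j = col U j" using 1 less.prems dP unfolding colH[OF less.prems] U_def sg_def by auto
      then show ?thesis using col_in_span[OF Uc, of j] 1 dP by auto
    next
      case 3
      define q where "q = j - (Q - r + 1)"
      have q: "d \<le> q" "q < r" "sg q = j" using 3 less.prems rQ unfolding q_def sg_def by auto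
      have "col H j = col U q" using q less.prems unfolding colH[OF less.prems] U_def by auto
      then show ?thesis using col_in_span[OF Uc, of q] q by auto
    next
      case 2
      have "col H j = vec n (\<lambda>i. \<Sum>k<d. (- c k / c d) * col H (j - d + k) $ i)"
      proof (rule eq_vecI)
        fix i assume "i < dim_vec (vec n (\<lambda>i. \<Sum>k<d. (- c k / c d) * col H (j - d + k) $ i))"
        hence i: "i < n" by simp
        have "col H j $ i = x ! (d + (i + j - d))" using i 2 less.prems colH by auto
        also have "\<dots> = (\<Sum>k<d. (- c k / c d) * x ! (k + (i + j - d)))"
          by (rule rec) (use i 2 nP rQ in auto)
        also have "\<dots> = (\<Sum>k<d. (- c k / c d) * col H (j - d + k) $ i)"
          using 2 less.prems i by (intro sum.cong refl) (simp add: colH add.commute add.left_commute)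
        finally show "col H j $ i = vec n (\<lambda>i. \<Sum>k<d. (- c k / c d) * col H (j - d + k) $ i) $ i"
          using i by simp
      qed (use Hc 2 less.prems in auto)
      also have "\<dots> \<in> span (set (cols U))"
      proof (rule span_sum[OF cU])
        fix k assume k: "k < d"
        show "col H (j - d + k) \<in> span (set (cols U)) \<and> col H (j - d + k) \<in> carrier_vec n"
          using less.IH[of "j - d + k"] k 2 less.prems Hc by auto
      qed
      finally show ?thesis .
    qed
  qed
  have "set (cols H) \<subseteq> span (set (cols U))"
  proof
    fix v assume "v \<in> set (cols H)"
    then obtain j where "j < Q + 1" "v = col H j" using Hc by (auto simp: in_set_conv_nth)
    thus "v \<in> span (set (cols U))" using main by auto
  qed
  hence "rank H \<le> rank U" using rank_le_span[OF Uc Hc] by auto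
  also have "\<dots> \<le> r" using rank_le_nc[OF Uc] .
  finally show ?thesis unfolding H_def .
qed

lemma lemA:
  fixes x :: "'a list"
  assumes nP: "n = P + 1" and rP: "r \<le> P" and rQ: "r \<le> Q"
    and rk: "rank (hankel P Q x) \<le> r"
  shows "\<exists>c. (\<exists>k\<le>r. c k \<noteq> 0) \<and> (\<forall>l \<le> P + Q - r. (\<Sum>k\<le>r. c k * x ! (k + l)) = 0)"
proof -
  define H where "H = hankel P Q x"
  have Hc: "H \<in> carrier_mat n (Q+1)" unfolding H_def hankel_def nP by auto
  have colH: "col H j = vec n (\<lambda>i. x ! (i + j))" if "j \<le> Q" for j
    using that unfolding H_def hankel_def nP by auto
  have bound: "k \<le> r" if Bc: "B \<in> carrier_mat n k" and sp: "set (cols B) \<subseteq> span (set (cols H))"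
    and inj: "\<And>v. v \<in> carrier_vec k \<Longrightarrow> B *\<^sub>v v = 0\<^sub>v n \<Longrightarrow> v = 0\<^sub>v k" for B k
  proof -
    have "k = rank B" using rank_inj[OF Bc inj] by simp
    also have "\<dots> \<le> rank H" using rank_le_span[OF Hc Bc sp] .
    finally show ?thesis using rk unfolding H_def by simp
  qed
  have colsB: "set (cols B) \<subseteq> span (set (cols H))"
    if Bc: "B \<in> carrier_mat n k" and "\<And>j. j < k \<Longrightarrow> col B j \<in> span (set (cols H))" for B k
  proof
    fix v assume "v \<in> set (cols B)"
    then obtain j where "j < k" "v = col B j" using Bc by (auto simp: in_set_conv_nth)
    thus "v \<in> span (set (cols H))" using that by auto
  qed
  have cH: "set (cols H) \<subseteq> carrier_vec n" using Hc cols_dim by blast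
  define dep where "dep k \<longleftrightarrow> (\<exists>v. (\<exists>j\<le>k. v j \<noteq> 0) \<and> (\<forall>i\<le>P. (\<Sum>j\<le>k. v j * x ! (i + j)) = 0))" for k
  have depr: "dep r"
  proof (rule ccontr)
    assume nd: "\<not> dep r"
    define B where "B = mat n (r+1) (\<lambda>(i,j). x ! (i + j))"
    have Bc: "B \<in> carrier_mat n (r+1)" unfolding B_def by auto
    have "r + 1 \<le> r"
    proof (rule bound[OF Bc colsB[OF Bc]])
      fix j assume j: "j < r + 1"
      have "col B j = col H j" using j rQ colH[of j] unfolding B_def by auto
      thus "col B j \<in> span (set (cols H))" using col_in_span[OF Hc, of j] j rQ by auto
    next
      fix v :: "'a vec" assume v: "v \<in> carrier_vec (r+1)" and Bv: "B *\<^sub>v v = 0\<^sub>v n"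
      have eq: "(\<Sum>j\<le>r. v $ j * x ! (i + j)) = 0" if i: "i \<le> P" for i
      proof -
        have "(B *\<^sub>v v) $ i = 0" using Bv i nP by simp
        moreover have "(B *\<^sub>v v) $ i = (\<Sum>j<r+1. x ! (i + j) * v $ j)" unfolding B_def
          by (rule trans[OF mat_mult_vec_sum]) (use i nP v in auto)
        ultimately have "(\<Sum>j<r+1. x ! (i + j) * v $ j) = 0" by simp
        thus ?thesis by (simp add: lessThan_Suc_atMost mult.commute)
      qed
      show "v = 0\<^sub>v (r+1)"
      proof (rule ccontr)
        assume "v \<noteq> 0\<^sub>v (r+1)"
        then obtain j where "j < r + 1" "v $ j \<noteq> 0" using v by (auto simp: vec_eq_iff)
        hence "dep r" unfolding dep_def using eq by (intro exI[of _ "\<lambda>j. v $ j"]) (auto simp: less_Suc_eq_le)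
        thus False using nd by simp
      qed
    qed
    thus False by simp
  qed
  define t where "t = (LEAST k. dep k)"
  have tr: "t \<le> r" unfolding t_def using depr by (rule Least_le)
  have dept: "dep t" unfolding t_def using depr by (rule LeastI)
  have ndep: "\<not> dep k" if "k < t" for k using that unfolding t_def by (rule not_less_Least)
  obtain v where vnz: "\<exists>j\<le>t. v j \<noteq> 0" and veq: "\<And>i. i \<le> P \<Longrightarrow> (\<Sum>j\<le>t. v j * x ! (i + j)) = 0"
    using dept unfolding dep_def by blast
  have vt: "v t \<noteq> 0"
  proof
    assume vt0: "v t = 0"
    then obtain j where j: "j \<le> t" "v j \<noteq> 0" "j \<noteq> t" using vnz by blast
    then obtain s where ts: "t = Suc s" by (cases t) auto
    have "dep s" unfolding dep_def
    proof (intro exI[of _ v] conjI allI impI)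
      show "\<exists>j\<le>s. v j \<noteq> 0" using j ts by (intro exI[of _ j]) auto
      fix i assume i: "i \<le> P"
      have "(\<Sum>j\<le>t. v j * x ! (i + j)) = (\<Sum>j\<le>s. v j * x ! (i + j))" using vt0 unfolding ts by simp
      thus "(\<Sum>j\<le>s. v j * x ! (i + j)) = 0" using veq[OF i] by simp
    qed
    thus False using ndep[of s] ts by simp
  qed
  define e where "e j = v j / v t" for j
  have et: "e t = 1" unfolding e_def using vt by simp
  define g where "g l = (\<Sum>k\<le>t. e k * x ! (k + l))" for l
  have g0: "g l = 0" if "l \<le> P" for l
  proof -
    have "g l = (\<Sum>j\<le>t. v j * x ! (l + j)) / v t"
      unfolding g_def e_def by (simp add: sum_divide_distrib add.commute)
    thus ?thesis using veq[OF that] by simp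
  qed
  have recx: "x ! (t + l) = - (\<Sum>k<t. e k * x ! (k + l))" if "l \<le> P" for l
  proof -
    have "g l = e t * x ! (t + l) + (\<Sum>k<t. e k * x ! (k + l))"
      unfolding g_def by (simp add: lessThan_Suc_atMost[symmetric])
    thus ?thesis using g0[OF that] et by (simp add: eq_neg_iff_add_eq_0)
  qed
  have indep: "\<forall>j<t. a j = 0" if a: "\<And>i. i \<le> P \<Longrightarrow> (\<Sum>j<t. a j * x ! (i + j)) = 0" for a
  proof (rule ccontr)
    assume "\<not> (\<forall>j<t. a j = 0)"
    then obtain j where j: "j < t" "a j \<noteq> 0" by auto
    have "{..<t} = {..t-1}" using j by auto
    hence "dep (t - 1)" unfolding dep_def using j a by (intro exI[of _ a]) auto
    thus False using ndep[of "t-1"] j by simp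
  qed
  have kryl: "(\<Sum>j<t. a j * x ! (i + j)) = 0" if a: "\<And>i. i < t \<Longrightarrow> (\<Sum>j<t. a j * x ! (i + j)) = 0"
    and "i \<le> P" for a i
    using \<open>i \<le> P\<close>
  proof (induction i rule: less_induct)
    case (less i)
    show ?case
    proof (cases "i < t")
      case True thus ?thesis using a by simp
    next
      case False
      have "(\<Sum>j<t. a j * x ! (i + j)) = (\<Sum>j<t. a j * (- (\<Sum>k<t. e k * x ! ((i - t + k) + j))))"
      proof (rule sum.cong[OF refl])
        fix j assume j: "j \<in> {..<t}"
        have "x ! (i + j) = x ! (t + (i - t + j))" using False by simp
        also have "\<dots> = - (\<Sum>k<t. e k * x ! (k + (i - t + j)))" using j less.prems False by (intro recx) auto
        also have "\<dots> = - (\<Sum>k<t. e k * x ! ((i - t + k) + j))" by (simp add: add.commute add.left_commute)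
        finally show "a j * x ! (i + j) = a j * (- (\<Sum>k<t. e k * x ! ((i - t + k) + j)))" by simp
      qed
      also have "\<dots> = - (\<Sum>j<t. \<Sum>k<t. e k * (a j * x ! ((i - t + k) + j)))"
        by (simp add: sum_distrib_left sum_negf mult.left_commute)
      also have "\<dots> = - (\<Sum>k<t. \<Sum>j<t. e k * (a j * x ! ((i - t + k) + j)))"
        by (subst sum.swap) (rule refl)
      also have "\<dots> = - (\<Sum>k<t. e k * (\<Sum>j<t. a j * x ! ((i - t + k) + j)))"
        by (simp add: sum_distrib_left)
      also have "\<dots> = 0"
      proof -
        have "(\<Sum>k<t. e k * (\<Sum>j<t. a j * x ! ((i - t + k) + j))) = 0"
        proof (intro sum.neutral ballI)
          fix k assume "k \<in> {..<t}"
          hence "i - t + k < i" "i - t + k \<le> P" using False less.prems by auto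
          from less.IH[OF this] show "e k * (\<Sum>j<t. a j * x ! ((i - t + k) + j)) = 0" by simp
        qed
        thus ?thesis by simp
      qed
      finally show ?thesis .
    qed
  qed
  have gall: "\<forall>l \<le> P + Q - r. g l = 0"
  proof (rule ccontr)
    assume "\<not> (\<forall>l \<le> P + Q - r. g l = 0)"
    then obtain l1 where l1: "l1 \<le> P + Q - r" "g l1 \<noteq> 0" by auto
    define L0 where "L0 = (LEAST l. g l \<noteq> 0)"
    have gL0: "g L0 \<noteq> 0" unfolding L0_def using l1(2) by (rule LeastI)
    have "L0 \<le> l1" unfolding L0_def using l1(2) by (rule Least_le)
    hence L0le: "L0 \<le> P + Q - r" using l1 by simp
    have gbelow: "g l = 0" if "l < L0" for l using not_less_Least[OF that[unfolded L0_def]] by simp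
    have PL0: "P < L0" using g0 gL0 by (metis not_less)
    define dl where "dl = L0 - P"
    define w where "w = r - t"
    have dlQ: "dl + r \<le> Q" using L0le PL0 rQ unfolding dl_def by simp
    have rtw: "r + 1 = t + (w + 1)" using tr unfolding w_def by simp
    define B where "B = mat n (r+1) (\<lambda>(i,j). if j < t then x ! (i + j) else g (i + dl + (j - t)))"
    have Bc: "B \<in> carrier_mat n (r+1)" unfolding B_def by auto
    have "r + 1 \<le> r"
    proof (rule bound[OF Bc colsB[OF Bc]])
      fix j assume j: "j < r + 1"
      show "col B j \<in> span (set (cols H))"
      proof (cases "j < t")
        case True
        have "col B j = col H j" using j rQ tr True colH[of j] unfolding B_def by auto
        thus ?thesis using col_in_span[OF Hc, of j] j rQ by auto
      next
        case False
        have "col B j = vec n (\<lambda>i. \<Sum>k<t+1. e k * col H (dl + (j - t) + k) $ i)"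
        proof (rule eq_vecI)
          fix i assume "i < dim_vec (vec n (\<lambda>i. \<Sum>k<t+1. e k * col H (dl + (j - t) + k) $ i))"
          hence i: "i < n" by simp
          have "col B j $ i = g (i + dl + (j - t))" using i j False unfolding B_def by auto
          also have "\<dots> = (\<Sum>k<t+1. e k * x ! (k + (i + dl + (j - t))))"
            unfolding g_def by (simp add: lessThan_Suc_atMost)
          also have "\<dots> = (\<Sum>k<t+1. e k * col H (dl + (j - t) + k) $ i)"
          proof (rule sum.cong[OF refl])
            fix k assume k: "k \<in> {..<t+1}"
            have "dl + (j - t) + k \<le> Q" using k j dlQ False by auto
            thus "e k * x ! (k + (i + dl + (j - t))) = e k * col H (dl + (j - t) + k) $ i"
              using i colH by (simp add: add.commute add.left_commute)
          qed
          finally show "col B j $ i = vec n (\<lambda>i. \<Sum>k<t+1. e k * col H (dl + (j - t) + k) $ i) $ i"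
            using i by simp
        qed (use Bc j in auto)
        also have "\<dots> \<in> span (set (cols H))"
        proof (rule span_sum[OF cH])
          fix k assume k: "k < t + 1"
          have "dl + (j - t) + k \<le> Q" using k j dlQ False by auto
          thus "col H (dl + (j - t) + k) \<in> span (set (cols H)) \<and> col H (dl + (j - t) + k) \<in> carrier_vec n"
            using col_in_span[OF Hc] Hc by auto
        qed
        finally show ?thesis .
      qed
    next
      fix al :: "'a vec" assume al: "al \<in> carrier_vec (r+1)" and Bal: "B *\<^sub>v al = 0\<^sub>v n"
      define a where "a j = al $ j" for j
      have E: "(\<Sum>j<t. a j * x ! (i + j)) + (\<Sum>p<w+1. a (t+p) * g (i + dl + p)) = 0" if i: "i \<le> P" for i
      proof -
        have "(B *\<^sub>v al) $ i = 0" using Bal i nP by simp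
        moreover have "(B *\<^sub>v al) $ i = (\<Sum>j<r+1. (if j < t then x ! (i + j) else g (i + dl + (j - t))) * al $ j)"
          unfolding B_def by (rule trans[OF mat_mult_vec_sum]) (use i nP al in auto)
        moreover have "(\<Sum>j<r+1. (if j < t then x ! (i + j) else g (i + dl + (j - t))) * al $ j)
            = (\<Sum>j<t. a j * x ! (i + j)) + (\<Sum>p<w+1. a (t+p) * g (i + dl + p))"
          unfolding rtw sum_split_add a_def by (simp add: mult.commute)
        ultimately show ?thesis by simp
      qed
      have E1: "(\<Sum>j<t. a j * x ! (i + j)) = 0" if i: "i + w < P" for i
      proof -
        have "(\<Sum>p<w+1. a (t+p) * g (i + dl + p)) = 0"
        proof (intro sum.neutral ballI)
          fix p assume "p \<in> {..<w+1}"
          hence "i + dl + p < L0" using i PL0 unfolding dl_def by auto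
          thus "a (t+p) * g (i + dl + p) = 0" using gbelow by simp
        qed
        thus ?thesis using E[of i] i by simp
      qed
      have a0: "\<forall>j<t. a j = 0"
      proof (rule indep)
        fix i assume i: "i \<le> P"
        show "(\<Sum>j<t. a j * x ! (i + j)) = 0"
        proof (rule kryl[OF _ i])
          fix i' assume "i' < t"
          hence "i' + w < P \<or> (i' + w < r + 1 \<and> r \<le> P)" using tr rP unfolding w_def by auto
          thus "(\<Sum>j<t. a j * x ! (i' + j)) = 0" using E1 \<open>i' < t\<close> tr rP unfolding w_def
            by (metis add.commute add_less_mono1 le_add_diff_inverse less_le_trans)
        qed
      qed
      have E2: "(\<Sum>p<w+1. a (t+p) * g (i + dl + p)) = 0" if i: "i \<le> P" for i
      proof -
        have "(\<Sum>j<t. a j * x ! (i + j)) = 0" using a0 by simp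
        thus ?thesis using E[OF i] by simp
      qed
      have a1: "a (t+p) = 0" if "p \<le> w" for p
        using that
      proof (induction "w - p" arbitrary: p rule: less_induct)
        case less
        have pP: "p \<le> P" using less.prems rP unfolding w_def by simp
        have "(\<Sum>p'<w+1. a (t+p') * g ((P - p) + dl + p')) = (\<Sum>p'<w+1. if p' = p then a (t+p) * g L0 else 0)"
        proof (rule sum.cong[OF refl])
          fix p' assume p': "p' \<in> {..<w+1}"
          consider "p' < p" | "p' = p" | "p < p'" by linarith
          thus "a (t+p') * g ((P - p) + dl + p') = (if p' = p then a (t+p) * g L0 else 0)"
          proof cases
            case 1
            hence "(P - p) + dl + p' < L0" using pP PL0 unfolding dl_def by auto
            thus ?thesis using gbelow 1 by simp
          next
            case 2
            hence "(P - p) + dl + p' = L0" using pP PL0 unfolding dl_def by auto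
            thus ?thesis using 2 by simp
          next
            case 3
            hence "a (t+p') = 0" using less.hyps[of p'] p' less.prems by auto
            thus ?thesis using 3 by simp
          qed
        qed
        also have "\<dots> = a (t+p) * g L0" using less.prems by simp
        finally have "a (t+p) * g L0 = 0" using E2[of "P - p"] by simp
        thus ?case using gL0 by simp
      qed
      show "al = 0\<^sub>v (r+1)"
      proof (rule eq_vecI)
        fix j assume "j < dim_vec (0\<^sub>v (r+1) :: 'a vec)"
        hence j: "j < r + 1" by simp
        show "al $ j = 0\<^sub>v (r+1) $ j"
        proof (cases "j < t")
          case True thus ?thesis using a0 j unfolding a_def by simp
        next
          case False
          hence "a (t + (j - t)) = 0" using j tr w_def by (intro a1) auto
          thus ?thesis using False j unfolding a_def by simp
        qed
      qed (use al in auto)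
    qed
    thus False by simp
  qed
  show ?thesis
  proof (intro exI[of _ "\<lambda>k. if k \<le> t then e k else 0"] conjI allI impI)
    show "\<exists>k\<le>r. (if k \<le> t then e k else 0) \<noteq> 0" using tr et by (intro exI[of _ t]) auto
    fix l assume l: "l \<le> P + Q - r"
    have "(\<Sum>k\<le>r. (if k \<le> t then e k else 0) * x ! (k + l)) = (\<Sum>k\<le>t. (if k \<le> t then e k else 0) * x ! (k + l))"
      by (rule sum.mono_neutral_right) (use tr in auto)
    also have "\<dots> = g l" unfolding g_def by simp
    finally show "(\<Sum>k\<le>r. (if k \<le> t then e k else 0) * x ! (k + l)) = 0" using gall l by simp
  qed
qed
end

theorem lemma11:
  fixes x :: "'a::field list" and u m n r :: nat
  assumes "length x = u + 1"
    and "m + n \<le> u" and "r \<le> m" and "r \<le> n"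
  shows "mrank (hankel m n x) \<le> r \<longleftrightarrow> mrank (hankel r (m + n - r) x) \<le> r"
proof -
  have mr: "\<And>P Q. mrank (hankel P Q x) = vec_space.rank (P+1) (hankel P Q x)"
    unfolding mrank_def hankel_def by simp
  show ?thesis
  proof
    assume "mrank (hankel m n x) \<le> r"
    hence "vec_space.rank (m+1) (hankel m n x) \<le> r" using mr by simp
    from vec_space.lemA[where n="m+1" and P=m and Q=n and r=r and x=x, OF refl assms(3,4) this]
    obtain c k0 where c: "k0 \<le> r" "c k0 \<noteq> 0" "\<forall>l\<le>m + n - r. (\<Sum>k\<le>r. c k * x ! (k + l)) = 0"
      by blast
    have "vec_space.rank (r+1) (hankel r (m + n - r) x) \<le> r"
      by (rule vec_space.lemB[where n="r+1" and P=r and Q="m+n-r" and r=r and x=x and c=c and kz=k0, OF refl _ c(2) c(1)])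
        (use c assms in auto)
    thus "mrank (hankel r (m + n - r) x) \<le> r" using mr by simp
  next
    assume "mrank (hankel r (m + n - r) x) \<le> r"
    hence "vec_space.rank (r+1) (hankel r (m + n - r) x) \<le> r" using mr by simp
    moreover have "r \<le> m + n - r" using assms by simp
    ultimately have "\<exists>c. (\<exists>k\<le>r. c k \<noteq> 0) \<and> (\<forall>l \<le> r + (m+n-r) - r. (\<Sum>k\<le>r. c k * x ! (k + l)) = 0)"
      using vec_space.lemA[where n="r+1" and P=r and Q="m+n-r" and r=r and x=x, OF refl le_refl] by blast
    then
    obtain c k0 where c: "k0 \<le> r" "c k0 \<noteq> 0" "\<forall>l\<le>r + (m + n - r) - r. (\<Sum>k\<le>r. c k * x ! (k + l)) = 0"
      by blast
    have "vec_space.rank (m+1) (hankel m n x) \<le> r"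
      by (rule vec_space.lemB[where n="m+1" and P=m and Q=n and r=r and x=x and c=c and kz=k0, OF refl _ c(2) c(1)])
        (use c assms in auto)
    thus "mrank (hankel m n x) \<le> r" using mr by simp
  qed
qed

end
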